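(* Let $\mathbf g=(g_1,\dots,g_s)$ and $J=\sqrt[\mathbb R]{\operatorname{supp}\mathcal Q(\mathbf g)}$. Let $\mathbf h=(h_1,\dots,h_m)$ be polynomials with $(\mathbf h)\subseteq J$ and $\deg h_i\le d$ for all $i$. Then there exists $k\ge d$ such that $$\mathcal L_k(\mathbf g)^{[d]}\subseteq\mathcal L_d(\mathbf g,\pm\mathbf h)\subseteq\mathcal L_d(\mathbf g).$$ In particular $\mathcal L_k(\mathbf g)^{[d]}\subseteq\mathcal L_d(\pm\mathbf h)$.
   Context: $\mathbb R[\mathbf X]=\mathbb R[X_1,\dots,X_n]$, $\mathbb R[\mathbf X]_t$ polynomials of degree $\le t$; $\Sigma^2$ sums of squares, $\Sigma^2_t=\Sigma^2\cap\mathbb R[\mathbf X]_t$. For a finite family $G$, $\mathcal Q_t(G)=\{s_0+\sum_{g\in G}s_gg:s_0\in\Sigma^2_t,s_g\in\Sigma^2,\deg s_g\le t-\deg g\}$, $\mathcal Q(G)=\bigcup_t\mathcal Q_t(G)$, $\mathcal L_t(G)=\{\sigma\in(\mathbb R[\mathbf X]_t)^*:\sigma\ge0\text{ on }\mathcal Q_t(G)\}$. $(\mathbf g,\pm\mathbf h)$ denotes the family $g_1,\dots,g_s,h_1,-h_1,\dots,h_m,-h_m$ and $\pm\mathbf h$ the family $h_1,-h_1,\dots,h_m,-h_m$. $\operatorname{supp}Q=Q\cap(-Q)$, $\sqrt[\mathbb R]{I}=\{p:\exists m', s\in\Sigma^2,\ p^{2m'}+s\in I\}$. For $\sigma\in(\mathbb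 R[\mathbf X]_k)^*$, $\sigma^{[d]}$ is its restriction to $\mathbb R[\mathbf X]_d$ and $B^{[d]}=\{\sigma^{[d]}:\sigma\in B\}$. *)

theory Defs
  imports Complex_Main "HOL-Library.Poly_Mapping"
begin

text \<open>Real polynomials in the variables indexed by a finite type 'v (so n = CARD('v)):
  finitely supported maps from monomials (exponent vectors 'v =>0 nat) to real coefficients.\<close>
type_synonym 'v mpoly = "('v \<Rightarrow>\<^sub>0 nat) \<Rightarrow>\<^sub>0 real"

definition mon_deg :: "('v \<Rightarrow>\<^sub>0 nat) \<Rightarrow> nat" where
  "mon_deg \<alpha> = (\<Sum>v\<in>Poly_Mapping.keys \<alpha>. Poly_Mapping.lookup \<alpha> v)"

text \<open>total degree (the zero polynomial gets degree 0)\<close>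
definition mdeg :: "'v mpoly \<Rightarrow> nat" where
  "mdeg p = Max (insert 0 (mon_deg ` Poly_Mapping.keys p))"

definition Pdeg :: "nat \<Rightarrow> 'v mpoly set" where
  "Pdeg t = {p. mdeg p \<le> t}"

definition smult_mp :: "real \<Rightarrow> 'v mpoly \<Rightarrow> 'v mpoly" where
  "smult_mp c p = Poly_Mapping.map (\<lambda>x. c * x) p"

definition sos :: "'v mpoly \<Rightarrow> bool" where
  "sos p \<longleftrightarrow> (\<exists>qs. p = sum_list (map (\<lambda>q. q * q) qs))"

text \<open>truncated quadratic module Q_t(G); the family G is a list;
  s_g = 0 is always allowed (deg 0 = -infinity)\<close>
definition Qt :: "nat \<Rightarrow> 'v mpoly list \<Rightarrow> 'v mpoly set" where
  "Qt t G = {s0 + (\<Sum>i<length G. s i * G ! i) | s0 s.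
      sos s0 \<and> mdeg s0 \<le> t \<and>
      (\<forall>i<length G. sos (s i) \<and> (s i = 0 \<or> mdeg (s i) + mdeg (G ! i) \<le> t))}"

definition QM :: "'v mpoly list \<Rightarrow> 'v mpoly set" where
  "QM G = (\<Union>t. Qt t G)"

definition supp :: "'v mpoly set \<Rightarrow> 'v mpoly set" where
  "supp Q = Q \<inter> uminus ` Q"

definition real_radical :: "'v mpoly set \<Rightarrow> 'v mpoly set" where
  "real_radical I = {p. \<exists>m s. sos s \<and> p ^ (2 * m) + s \<in> I}"

definition gen_ideal :: "'v mpoly list \<Rightarrow> 'v mpoly set" where
  "gen_ideal hs = {\<Sum>i<length hs. c i * hs ! i | c. True}"

definition pm :: "'v mpoly list \<Rightarrow> 'v mpoly list" where
  "pm hs = concat (map (\<lambda>h. [h, - h]) hs)"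

text \<open>(R[X]_t)^*: linear functionals on R[X]_t, represented canonically as
  functions that vanish outside R[X]_t\<close>
definition dual :: "nat \<Rightarrow> ('v mpoly \<Rightarrow> real) set" where
  "dual t = {\<sigma>. (\<forall>p\<in>Pdeg t. \<forall>q\<in>Pdeg t. \<sigma> (p + q) = \<sigma> p + \<sigma> q) \<and>
                 (\<forall>c. \<forall>p\<in>Pdeg t. \<sigma> (smult_mp c p) = c * \<sigma> p) \<and>
                 (\<forall>p. p \<notin> Pdeg t \<longrightarrow> \<sigma> p = 0)}"

definition Lt :: "nat \<Rightarrow> 'v mpoly list \<Rightarrow> ('v mpoly \<Rightarrow> real) set" where
  "Lt t G = {\<sigma> \<in> dual t. \<forall>q\<in>Qt t G. \<sigma> q \<ge> 0}"

definition restr :: "nat \<Rightarrow> ('v mpoly \<Rightarrow> real) \<Rightarrow> ('v mpoly \<Rightarrow> real)" where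
  "restr d \<sigma> = (\<lambda>p. if p \<in> Pdeg d then \<sigma> p else 0)"

end

theory Submission
  imports Defs
begin

lemma mon_deg_UNIV: "mon_deg (a::('v::finite) \<Rightarrow>\<^sub>0 nat) = (\<Sum>v\<in>UNIV. Poly_Mapping.lookup a v)"
  unfolding mon_deg_def
  by (rule sum.mono_neutral_left) (auto simp: in_keys_iff)

lemma mon_deg_add: "mon_deg ((a::('v::finite) \<Rightarrow>\<^sub>0 nat) + b) = mon_deg a + mon_deg b"
  by (simp add: mon_deg_UNIV lookup_add sum.distrib)

lemma mdeg_le_iff: "mdeg p \<le> t \<longleftrightarrow> (\<forall>a\<in>Poly_Mapping.keys p. mon_deg a \<le> t)"
  unfolding mdeg_def by (subst Max_le_iff) auto

lemma mdeg_add: "mdeg (p + q) \<le> max (mdeg p) (mdeg q)"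
  unfolding mdeg_le_iff using keys_add[of p q] mdeg_le_iff[of p] mdeg_le_iff[of q]
  by (metis Un_iff max.cobounded1 max.cobounded2 order_refl order_trans subsetD)

lemma mdeg_mult: "mdeg ((p::('v::finite) mpoly) * q) \<le> mdeg p + mdeg q"
  unfolding mdeg_le_iff
proof
  fix c assume "c \<in> Poly_Mapping.keys (p*q)"
  then obtain a b where "c = a + b" "a \<in> Poly_Mapping.keys p" "b \<in> Poly_Mapping.keys q" using keys_mult by blast
  then show "mon_deg c \<le> mdeg p + mdeg q"
    using mdeg_le_iff[of p "mdeg p"] mdeg_le_iff[of q "mdeg q"] by (simp add: mon_deg_add add_mono)
qed

lemma mdeg_uminus[simp]: "mdeg (- p) = mdeg p"
  unfolding mdeg_def by simp

lemma mdeg_one[simp]: "mdeg (1::('v::finite) mpoly) = 0"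
  unfolding mdeg_def by (simp add: mon_deg_def)

lemma mdeg_zero[simp]: "mdeg (0::('v::finite) mpoly) = 0"
  unfolding mdeg_def by simp

lemma mdeg_single0: "mdeg (Poly_Mapping.single 0 c :: ('v::finite) mpoly) = 0"
  unfolding mdeg_def by (simp add: mon_deg_def)

lemma smult_conv: "smult_mp c p = Poly_Mapping.single 0 c * p"
  unfolding smult_mp_def by (rule mult_map_scale_conv_mult)

lemma mdeg_smult: "mdeg (smult_mp c (p::('v::finite) mpoly)) \<le> mdeg p"
  using mdeg_mult[of "Poly_Mapping.single 0 c" p] by (simp add: smult_conv mdeg_single0)

lemma mdeg_pow: "mdeg ((p::('v::finite) mpoly) ^ n) \<le> n * mdeg p"
proof (induction n)
  case (Suc n) then show ?case using mdeg_mult[of p "p^n"] by simp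
qed simp


lemma Pdeg_add: "p \<in> Pdeg t \<Longrightarrow> q \<in> Pdeg t \<Longrightarrow> p + q \<in> Pdeg t"
  unfolding Pdeg_def using mdeg_add[of p q] by auto

lemma dual_zero: "\<sigma> \<in> dual k \<Longrightarrow> \<sigma> (0::('v::finite) mpoly) = 0"
proof -
  assume a: "\<sigma> \<in> dual k"
  have "(0::'v mpoly) \<in> Pdeg k" unfolding Pdeg_def by simp
  then have "\<sigma> (0 + 0) = \<sigma> 0 + \<sigma> 0" using a unfolding dual_def by blast
  then show ?thesis by simp
qed

lemma dual_add: "\<sigma> \<in> dual k \<Longrightarrow> mdeg p \<le> k \<Longrightarrow> mdeg q \<le> k \<Longrightarrow> \<sigma> (p + q) = \<sigma> p + \<sigma> q"
  unfolding dual_def Pdeg_def by auto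

lemma dual_smult: "\<sigma> \<in> dual k \<Longrightarrow> mdeg p \<le> k \<Longrightarrow> \<sigma> (Poly_Mapping.single 0 c * p) = c * \<sigma> p"
  unfolding dual_def Pdeg_def smult_conv[symmetric] by auto

lemma dual_uminus: "\<sigma> \<in> dual k \<Longrightarrow> mdeg (p::('v::finite) mpoly) \<le> k \<Longrightarrow> \<sigma> (- p) = - \<sigma> p"
proof -
  assume a: "\<sigma> \<in> dual k" "mdeg p \<le> k"
  have "- p = Poly_Mapping.single 0 (-1) * p"
    by (metis mult_minus1 mult_minus_left single_one single_uminus)
  then show ?thesis using dual_smult[OF a, of "-1"] by simp
qed

lemma dual_sum: assumes "\<sigma> \<in> dual k" "finite I" "(\<forall>i\<in>I. mdeg (f i :: ('v::finite) mpoly) \<le> k)"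
  shows "\<sigma> (\<Sum>i\<in>I. f i) = (\<Sum>i\<in>I. \<sigma> (f i)) \<and> mdeg (\<Sum>i\<in>I. f i) \<le> k"
  using assms(2,3)
proof (induction I rule: finite_induct)
  case empty then show ?case using assms(1) by (simp add: dual_zero)
next
  case (insert x F)
  then show ?case using dual_add[OF assms(1), of "f x" "sum f F"] mdeg_add[of "f x" "sum f F"]
    by auto
qed

lemma sos_sq: "sos (p * p)"
  unfolding sos_def by (rule exI[of _ "[p]"]) simp

lemma sos_zero: "sos 0"
  unfolding sos_def by (rule exI[of _ "[]"]) simp

lemma sos_in_Qt: "sos s \<Longrightarrow> mdeg s \<le> t \<Longrightarrow> s \<in> Qt t G"
  unfolding Qt_def by (rule CollectI, rule exI[of _ s], rule exI[of _ "\<lambda>_. 0"]) (simp add: sos_zero)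

lemma Qt_mono: "t \<le> t' \<Longrightarrow> Qt t G \<subseteq> Qt t' G"
  unfolding Qt_def by fastforce

lemma Lt_nonneg_sos: "\<sigma> \<in> Lt k G \<Longrightarrow> sos s \<Longrightarrow> mdeg s \<le> k \<Longrightarrow> \<sigma> s \<ge> 0"
  unfolding Lt_def using sos_in_Qt by blast

lemma quad_zero:
  fixes b c :: real
  assumes "\<forall>l. 2 * l * b + l^2 * c \<ge> 0" "c \<ge> 0"
  shows "b = 0"
proof -
  have "2 * (-b/(c+1)) * b + (-b/(c+1))^2 * c \<ge> 0" using assms(1) by blast
  then have "(2 * (-b/(c+1)) * b + (-b/(c+1))^2 * c) * (c+1)^2 \<ge> 0" using assms by simp
  moreover have "(2 * (-b/(c+1)) * b + (-b/(c+1))^2 * c) * (c+1)^2 = -(b^2 * (c + 2))"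
  proof -
    have "c + 1 \<noteq> 0" using assms(2) by linarith
    have 1: "(2 * (-b/(c+1)) * b) * (c+1)^2 = -2*b^2*(c+1)"
      using \<open>c + 1 \<noteq> 0\<close> by (simp add: power2_eq_square)
    have 2: "(-b/(c+1))^2 * c * (c+1)^2 = b^2*c"
      using \<open>c + 1 \<noteq> 0\<close> by (simp add: power_divide)
    show ?thesis using 1 2 by (simp add: distrib_right algebra_simps power2_eq_square)
  qed
  ultimately have "b^2 * (c+2) \<le> 0" by linarith
  moreover have "b^2 * (c+2) \<ge> 0" using assms(2) by simp
  ultimately have "b^2 * (c+2) = 0" by linarith
  then show ?thesis using assms(2) by simp
qed

lemma CS:
  fixes p q :: "('v::finite) mpoly"
  assumes s: "\<sigma> \<in> Lt k G" and p: "mdeg p \<le> a" and q: "mdeg q \<le> a" and k: "2 * a \<le> k"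
    and z: "\<sigma> (p * p) = 0"
  shows "\<sigma> (p * q) = 0"
proof -
  have d: "\<sigma> \<in> dual k" using s unfolding Lt_def by simp
  have pp: "mdeg (p*p) \<le> k" using mdeg_mult[of p p] p k by linarith
  have pq: "mdeg (p*q) \<le> k" using mdeg_mult[of p q] p q k by linarith
  have qq: "mdeg (q*q) \<le> k" using mdeg_mult[of q q] q k by linarith
  have c: "\<sigma> (q*q) \<ge> 0" using Lt_nonneg_sos[OF s sos_sq qq] .
  have "\<forall>l. 2 * l * \<sigma> (p*q) + l^2 * \<sigma> (q*q) \<ge> 0"
  proof
    fix l :: real
    define r where "r = p + Poly_Mapping.single 0 l * q"
    have "mdeg (Poly_Mapping.single 0 l * q) \<le> a"
      using mdeg_mult[of "Poly_Mapping.single 0 l" q] q by (simp add: mdeg_single0)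
    then have "mdeg r \<le> a" unfolding r_def using mdeg_add[of p "Poly_Mapping.single 0 l * q"] p
      by simp
    then have rr: "mdeg (r*r) \<le> k" using mdeg_mult[of r r] k by linarith
    have e: "r * r = p * p + (Poly_Mapping.single 0 (2*l) * (p*q) + Poly_Mapping.single 0 (l^2) * (q*q))"
    proof -
      let ?L = "Poly_Mapping.single 0 l :: 'v mpoly"
      have e1: "Poly_Mapping.single 0 (2*l) = ?L + ?L" unfolding mult_2 by (rule single_add)
      have e2: "Poly_Mapping.single 0 (l^2) = ?L * ?L" by (simp add: power2_eq_square mult_single)
      show ?thesis unfolding r_def e1 e2 by (simp add: algebra_simps)
    qed
    have m1: "mdeg (Poly_Mapping.single 0 (2*l) * (p*q)) \<le> k"
      using mdeg_mult[of "Poly_Mapping.single 0 (2*l)" "p*q"] pq by (simp add: mdeg_single0)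
    have m2: "mdeg (Poly_Mapping.single 0 (l^2) * (q*q)) \<le> k"
      using mdeg_mult[of "Poly_Mapping.single 0 (l^2)" "q*q"] qq by (simp add: mdeg_single0)
    have "\<sigma> (r*r) = \<sigma> (p*p) + (2*l * \<sigma> (p*q) + l^2 * \<sigma> (q*q))"
    proof -
      have m12: "mdeg (Poly_Mapping.single 0 (2*l) * (p*q) + Poly_Mapping.single 0 (l^2) * (q*q)) \<le> k"
        using mdeg_add[of "Poly_Mapping.single 0 (2*l) * (p*q)" "Poly_Mapping.single 0 (l^2) * (q*q)"] m1 m2
        by simp
      show ?thesis unfolding e dual_add[OF d pp m12] dual_add[OF d m1 m2] dual_smult[OF d pq] dual_smult[OF d qq]
        by simp
    qed
    moreover have "\<sigma> (r*r) \<ge> 0" using Lt_nonneg_sos[OF s sos_sq rr] .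
    ultimately show "2 * l * \<sigma> (p*q) + l^2 * \<sigma> (q*q) \<ge> 0" using z by simp
  qed
  then show ?thesis using quad_zero c by blast
qed


lemma descent:
  fixes h :: "('v::finite) mpoly"
  assumes s: "\<sigma> \<in> Lt k G"
  shows "n \<ge> 1 \<Longrightarrow> \<sigma> (h^(2*n)) = 0 \<Longrightarrow> 2*n*mdeg h \<le> k \<Longrightarrow> \<sigma> (h*h) = 0"
proof (induction n rule: less_induct)
  case (less n)
  have hn: "h^(2*n) = h^n * h^n" by (metis mult_2 power_add)
  show ?case
  proof (cases "n = 1")
    case True then show ?thesis using less.prems(2) hn by simp
  next
    case False
    define j where "j = (n+1) div 2"
    have n2: "n \<ge> 2" using False less.prems(1) by linarith
    have j: "1 \<le> j" "j < n" "n \<le> 2*j" "2*j - n \<le> n" 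
    proof -
      have e: "2 * j + (n+1) mod 2 = n + 1" unfolding j_def by simp
      have "(n+1) mod 2 < 2" by simp
      with e n2 show "1 \<le> j" "j < n" "n \<le> 2*j" "2*j - n \<le> n" by linarith+
    qed
    have a1: "mdeg (h^n) \<le> n * mdeg h" by (rule mdeg_pow)
    have a2: "mdeg (h^(2*j-n)) \<le> n * mdeg h"
    proof -
      have "(2*j-n) * mdeg h \<le> n * mdeg h" using j(4) by (rule mult_le_mono1)
      then show ?thesis using mdeg_pow[of h "2*j-n"] by linarith
    qed
    have "\<sigma> (h^n * h^n) = 0" using less.prems(2) hn by simp
    moreover have "2 * (n * mdeg h) \<le> k" using less.prems(3) by (simp add: mult.assoc)
    ultimately have "\<sigma> (h^n * h^(2*j-n)) = 0" using CS[OF s a1 a2] by blast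
    moreover have "h^n * h^(2*j-n) = h^(2*j)"
    proof -
      have "n + (2*j-n) = 2*j" using j(3) by linarith
      then show ?thesis by (metis power_add)
    qed
    ultimately have "\<sigma> (h^(2*j)) = 0" by simp
    moreover have "2*j*mdeg h \<le> k"
    proof -
      have "2*j*mdeg h \<le> 2*n*mdeg h" using j(2) by (intro mult_le_mono1) simp
      then show ?thesis using less.prems(3) by linarith
    qed
    ultimately show ?thesis using less.IH[OF j(2) j(1)] by blast
  qed
qed

lemma kill_h:
  fixes h :: "('v::finite) mpoly"
  assumes "h \<in> real_radical (supp (QM gs))"
  shows "\<exists>K. \<forall>k\<ge>K. \<forall>\<sigma>\<in>Lt k gs. \<forall>q. mdeg q \<le> d \<longrightarrow> \<sigma> (h*q) = 0"
proof -
  obtain m s where s: "sos s" and x: "h^(2*m) + s \<in> supp (QM gs)"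
    using assms unfolding real_radical_def by blast
  define x where "x = h^(2*m) + s"
  obtain t1 where t1: "x \<in> Qt t1 gs" using x unfolding x_def supp_def QM_def by blast
  obtain y t2 where y: "x = - y" "y \<in> Qt t2 gs" using x unfolding x_def supp_def QM_def by blast
  define a where "a = (m+2) * mdeg h + d"
  define K where "K = t1 + t2 + mdeg x + mdeg s + 2 * a"
  have "\<forall>\<sigma>\<in>Lt k gs. \<forall>q. mdeg q \<le> d \<longrightarrow> \<sigma> (h*q) = 0" if k: "k \<ge> K" for k
  proof (intro ballI allI impI)
    fix \<sigma> q assume \<sigma>: "\<sigma> \<in> Lt k gs" and q: "mdeg (q::'v mpoly) \<le> d"
    have dl: "\<sigma> \<in> dual k" using \<sigma> unfolding Lt_def by simp
    have "x \<in> Qt k gs" using t1 Qt_mono[of t1 k] k unfolding K_def by auto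
    then have x0: "\<sigma> x \<ge> 0" using \<sigma> unfolding Lt_def by auto
    have "y \<in> Qt k gs" using y Qt_mono[of t2 k] k unfolding K_def by auto
    then have "\<sigma> y \<ge> 0" using \<sigma> unfolding Lt_def by auto
    moreover have "mdeg y \<le> k"
    proof -
      have "y = - x" using y(1) by simp
      then have "mdeg y = mdeg x" by simp
      then show ?thesis using k unfolding K_def by linarith
    qed
    ultimately have "\<sigma> x \<le> 0" using dual_uminus[OF dl, of y] y by simp
    with x0 have sx: "\<sigma> x = 0" by simp
    have hm: "mdeg (h^(2*m)) \<le> k"
    proof -
      have "m * mdeg h \<le> (m+2) * mdeg h" by (rule mult_le_mono1) simp
      then have "2*m*mdeg h \<le> 2 * a" unfolding a_def by simp
      then show ?thesis using mdeg_pow[of h "2*m"] k unfolding K_def by linarith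
    qed
    have ms: "mdeg s \<le> k" using k unfolding K_def by linarith
    have "\<sigma> x = \<sigma> (h^(2*m)) + \<sigma> s" unfolding x_def by (rule dual_add[OF dl hm ms])
    moreover have "\<sigma> (h^(2*m)) \<ge> 0" using Lt_nonneg_sos[OF \<sigma> _ hm] sos_sq[of "h^m"]
      by (simp add: mult_2 power_add)
    moreover have "\<sigma> s \<ge> 0" using Lt_nonneg_sos[OF \<sigma> s ms] .
    ultimately have h2m: "\<sigma> (h^(2*m)) = 0" using sx by linarith
    have ka: "2 * a \<le> k" using k unfolding K_def by linarith
    have hh: "\<sigma> (h*h) = 0"
    proof (cases "m = 0")
      case True
      then have "\<sigma> (1 * 1) = 0" using h2m by simp
      from CS[OF \<sigma> _ _ ka this, of "h*h"] show ?thesis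
        using mdeg_mult[of h h] unfolding a_def by simp
    next
      case False
      show ?thesis
      proof (rule descent[OF \<sigma>, of m])
        show "2 * m * mdeg h \<le> k" using ka unfolding a_def by (simp add: algebra_simps)
      qed (use False h2m in auto)
    qed
    show "\<sigma> (h*q) = 0"
      by (rule CS[OF \<sigma> _ _ ka hh]) (use q in \<open>auto simp: a_def\<close>)
  qed
  then show ?thesis by blast
qed


lemma sum_split_add: "(\<Sum>i<m+n. f i) = (\<Sum>i<m. f i) + (\<Sum>j<n. f (m+j))"
  for f :: "nat \<Rightarrow> 'a::comm_monoid_add"
  by (induction n) (auto simp: add.assoc)

lemma sum_split_app: "(\<Sum>i<length (A@B). s i * (A@B)!i) =
   (\<Sum>i<length A. s i * A!i) + (\<Sum>j<length B. s (length A + j) * B!j)"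
  for A B :: "'v mpoly list"
  by (simp add: sum_split_add nth_append)

lemma Qt_app_left: "Qt d A \<subseteq> Qt d (A@B)"
proof
  fix x assume "x \<in> Qt d A"
  then obtain s0 s where x: "x = s0 + (\<Sum>i<length A. s i * A ! i)" "sos s0" "mdeg s0 \<le> d"
     "\<forall>i<length A. sos (s i) \<and> (s i = 0 \<or> mdeg (s i) + mdeg (A ! i) \<le> d)"
    unfolding Qt_def by blast
  define s' where "s' i = (if i < length A then s i else 0)" for i
  have "x = s0 + (\<Sum>i<length (A@B). s' i * (A@B) ! i)"
    by (subst sum_split_app) (simp add: x(1) s'_def)
  moreover have "\<forall>i<length (A@B). sos (s' i) \<and> (s' i = 0 \<or> mdeg (s' i) + mdeg ((A@B) ! i) \<le> d)"
    using x(4) unfolding s'_def by (auto simp: sos_zero nth_append)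
  ultimately show "x \<in> Qt d (A@B)" unfolding Qt_def using x(2,3) by blast
qed

lemma Qt_app_right: "Qt d B \<subseteq> Qt d (A@B)"
proof
  fix x assume "x \<in> Qt d B"
  then obtain s0 s where x: "x = s0 + (\<Sum>i<length B. s i * B ! i)" "sos s0" "mdeg s0 \<le> d"
     "\<forall>i<length B. sos (s i) \<and> (s i = 0 \<or> mdeg (s i) + mdeg (B ! i) \<le> d)"
    unfolding Qt_def by blast
  define s' where "s' i = (if i < length A then 0 else s (i - length A))" for i
  have "x = s0 + (\<Sum>i<length (A@B). s' i * (A@B) ! i)"
    by (subst sum_split_app) (simp add: x(1) s'_def)
  moreover have "\<forall>i<length (A@B). sos (s' i) \<and> (s' i = 0 \<or> mdeg (s' i) + mdeg ((A@B) ! i) \<le> d)"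
    using x(4) unfolding s'_def by (auto simp: sos_zero nth_append)
  ultimately show "x \<in> Qt d (A@B)" unfolding Qt_def using x(2,3) by blast
qed

lemma Lt_anti: "Qt d G \<subseteq> Qt d G' \<Longrightarrow> Lt d G' \<subseteq> Lt d G"
  unfolding Lt_def by blast

lemma set_pm: "x \<in> set (pm hs) \<Longrightarrow> \<exists>h\<in>set hs. x = h \<or> x = - h"
  unfolding pm_def by auto

lemma in_gen: "h \<in> set hs \<Longrightarrow> h \<in> gen_ideal hs"
proof -
  assume "h \<in> set hs"
  then obtain i where i: "i < length hs" "h = hs ! i" by (auto simp: in_set_conv_nth)
  have "(\<Sum>j<length hs. (if j = i then 1 else 0) * hs ! j) = hs ! i"
  proof -
    have "(\<Sum>j<length hs. (if j = i then 1 else 0) * hs ! j) = (\<Sum>j<length hs. if j = i then hs ! j else 0)"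
      by (rule sum.cong) auto
    then show ?thesis using i(1) by simp
  qed
  then show ?thesis unfolding gen_ideal_def i(2)
    by (intro CollectI exI[of _ "\<lambda>j. if j = i then 1 else 0"]) simp
qed


lemma restr_dual:
  fixes \<sigma> :: "('v::finite) mpoly \<Rightarrow> real"
  assumes "\<sigma> \<in> dual k" "d \<le> k" shows "restr d \<sigma> \<in> dual d"
  unfolding dual_def
proof (intro CollectI conjI ballI allI impI)
  fix p q :: "'v mpoly" assume p: "p \<in> Pdeg d" and q: "q \<in> Pdeg d"
  then show "restr d \<sigma> (p + q) = restr d \<sigma> p + restr d \<sigma> q"
    using Pdeg_add[OF p q] dual_add[OF assms(1), of p q] assms(2) unfolding restr_def Pdeg_def by auto
next
  fix c and p :: "'v mpoly" assume p: "p \<in> Pdeg d"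
  then show "restr d \<sigma> (smult_mp c p) = c * restr d \<sigma> p"
    using mdeg_smult[of c p] dual_smult[OF assms(1), of p c] assms(2)
    unfolding restr_def Pdeg_def smult_conv[symmetric] by auto
next
  fix p :: "'v mpoly" assume "p \<notin> Pdeg d" then show "restr d \<sigma> p = 0" unfolding restr_def by simp
qed

theorem mainTheorem13:
  fixes gs hs :: "('v::finite) mpoly list" and d :: nat
  assumes "gen_ideal hs \<subseteq> real_radical (supp (QM gs))"
    and "\<forall>h\<in>set hs. mdeg h \<le> d"
  shows "\<exists>k\<ge>d. restr d ` Lt k gs \<subseteq> Lt d (gs @ pm hs)
              \<and> Lt d (gs @ pm hs) \<subseteq> Lt d gs
              \<and> restr d ` Lt k gs \<subseteq> Lt d (pm hs)"
proof -
  have "\<forall>h\<in>set hs. \<exists>K. \<forall>k\<ge>K. \<forall>\<sigma>\<in>Lt k gs. \<forall>q. mdeg q \<le> d \<longrightarrow> \<sigma> (h*q) = 0"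
    using kill_h in_gen assms(1) by blast
  then obtain Kf where Kf: "\<forall>h\<in>set hs. \<forall>k\<ge>Kf h. \<forall>\<sigma>\<in>Lt k gs. \<forall>q. mdeg q \<le> d \<longrightarrow> \<sigma> (h*q) = 0"
    by metis
  define k where "k = Max (insert d (Kf ` set hs))"
  have kd: "d \<le> k" unfolding k_def by simp
  have kill: "\<sigma> (h*q) = 0" if "h \<in> set hs" "\<sigma> \<in> Lt k gs" "mdeg q \<le> d" for h \<sigma> q
    using Kf that unfolding k_def by (meson Max_ge finite_imageI finite_insert finite_set imageI insertCI)
  have A: "restr d ` Lt k gs \<subseteq> Lt d (gs @ pm hs)"
  proof
    fix \<tau> assume "\<tau> \<in> restr d ` Lt k gs"
    then obtain \<sigma> where \<sigma>: "\<sigma> \<in> Lt k gs" and \<tau>: "\<tau> = restr d \<sigma>" by blast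
    have dl: "\<sigma> \<in> dual k" using \<sigma> unfolding Lt_def by simp
    have "\<tau> x \<ge> 0" if x: "x \<in> Qt d (gs @ pm hs)" for x
    proof (cases "x \<in> Pdeg d")
      case False then show ?thesis unfolding \<tau> restr_def by simp
    next
      case True
      obtain s0 s where xs: "x = s0 + (\<Sum>i<length (gs @ pm hs). s i * (gs @ pm hs) ! i)" "sos s0" "mdeg s0 \<le> d"
        "\<forall>i<length (gs @ pm hs). sos (s i) \<and> (s i = 0 \<or> mdeg (s i) + mdeg ((gs @ pm hs) ! i) \<le> d)"
        using x unfolding Qt_def by blast
      define Aa where "Aa = (\<Sum>i<length gs. s i * gs ! i)"
      define Bb where "Bb = (\<Sum>j<length (pm hs). s (length gs + j) * pm hs ! j)"
      have x2: "x = (s0 + Aa) + Bb" using xs(1) unfolding Aa_def Bb_def sum_split_app by (simp add: add.assoc)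
      have Bt: "\<sigma> (s (length gs + j) * pm hs ! j) = 0 \<and> mdeg (s (length gs + j) * pm hs ! j) \<le> k"
        if j: "j < length (pm hs)" for j
      proof -
        let ?t = "s (length gs + j)" and ?y = "pm hs ! j"
        have c: "?t = 0 \<or> mdeg ?t + mdeg ?y \<le> d"
          using xs(4)[rule_format, of "length gs + j"] j by (simp add: nth_append)
        obtain h where h: "h \<in> set hs" "?y = h \<or> ?y = - h" using set_pm[of ?y hs] j by auto
        show ?thesis
        proof (cases "?t = 0")
          case True then show ?thesis using dual_zero[OF dl] by simp
        next
          case False
          then have c': "mdeg ?t + mdeg ?y \<le> d" using c by simp
          have m: "mdeg (?t * ?y) \<le> k" using mdeg_mult[of ?t ?y] c' kd by linarith
          from h(2) show ?thesis
          proof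
            assume e: "?y = h"
            have "\<sigma> (h * ?t) = 0" using kill[OF h(1) \<sigma>] c' by simp
            then show ?thesis using m e by (simp add: mult.commute)
          next
            assume e: "?y = - h"
            have "\<sigma> (h * (- ?t)) = 0" using kill[OF h(1) \<sigma>, of "- ?t"] c' by simp
            then show ?thesis using m e by (simp add: mult.commute)
          qed
        qed
      qed
      have B: "\<sigma> Bb = 0 \<and> mdeg Bb \<le> k" unfolding Bb_def using dual_sum[OF dl, of "{..<length (pm hs)}"] Bt by simp
      have At: "mdeg (s i * gs ! i) \<le> k" if i: "i < length gs" for i
      proof -
        have "s i = 0 \<or> mdeg (s i) + mdeg (gs ! i) \<le> d"
          using xs(4)[rule_format, of i] i by (simp add: nth_append)
        then show ?thesis using mdeg_mult[of "s i" "gs ! i"] kd by auto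
      qed
      have mA: "mdeg Aa \<le> k" unfolding Aa_def using dual_sum[OF dl, of "{..<length gs}"] At by simp
      have mSA: "mdeg (s0 + Aa) \<le> k" using mdeg_add[of s0 Aa] mA xs(3) kd by linarith
      have "s0 + Aa \<in> Qt d gs"
      proof -
        have "\<forall>i<length gs. sos (s i) \<and> (s i = 0 \<or> mdeg (s i) + mdeg (gs ! i) \<le> d)"
        proof (intro allI impI)
          fix i assume "i < length gs"
          then show "sos (s i) \<and> (s i = 0 \<or> mdeg (s i) + mdeg (gs ! i) \<le> d)"
            using xs(4)[rule_format, of i] by (simp add: nth_append)
        qed
        then show ?thesis unfolding Qt_def Aa_def using xs(2,3) by blast
      qed
      then have "s0 + Aa \<in> Qt k gs" using Qt_mono[OF kd] by blast
      then have "\<sigma> (s0 + Aa) \<ge> 0" using \<sigma> unfolding Lt_def by blast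
      moreover have "\<sigma> x = \<sigma> (s0 + Aa) + \<sigma> Bb" unfolding x2 using dual_add[OF dl mSA] B by blast
      ultimately show ?thesis unfolding \<tau> restr_def using True B by simp
    qed
    moreover have "\<tau> \<in> dual d" unfolding \<tau> by (rule restr_dual[OF dl kd])
    ultimately show "\<tau> \<in> Lt d (gs @ pm hs)" unfolding Lt_def by blast
  qed
  have B: "Lt d (gs @ pm hs) \<subseteq> Lt d gs" by (rule Lt_anti[OF Qt_app_left])
  have C: "Lt d (gs @ pm hs) \<subseteq> Lt d (pm hs)" by (rule Lt_anti[OF Qt_app_right])
  show ?thesis using A B C kd by blast
qed

end
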